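(* Let $0<\alpha<1$ and $\epsilon\ge 0$. For $i\in[l]$ let $\rho_i$ be a quantum state on a finite-dimensional Hilbert space $\mathcal H$ and $\Pi_i$ an orthogonal projector on $\mathcal H$ with $\operatorname{Tr}[\Pi_i\rho_i]\ge 1-\epsilon$. Let $\tilde{\mathcal H}=\mathcal H\oplus\mathcal H_1\oplus\cdots\oplus\mathcal H_l$ be as in the context, and view operators on $\mathcal H$ as operators on $\tilde{\mathcal H}$ via the identity embedding. Then there is an orthogonal projector $\hat\Pi$ on $\tilde{\mathcal H}$ such that $\operatorname{Tr}[\hat\Pi\rho_i]\ge 1-\epsilon-\alpha$ for all $i\in[l]$, and for every state $\sigma$ on $\mathcal H$, $$\operatorname{Tr}[\hat\Pi\sigma]\ \le\ \frac{1-\alpha}{\alpha}\sum_{i\in[l]}\operatorname{Tr}[\Pi_i\sigma].$$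
   Context: $\mathcal{H}_1,\ldots,\mathcal{H}_l$ are Hilbert spaces each of dimension $\dim\mathcal{H}$ and $\tilde{\mathcal{H}}:=\mathcal{H}\oplus\mathcal{H}_1\oplus\cdots\oplus\mathcal{H}_l$ is the orthogonal direct sum. *)

theory Defs
  imports "Jordan_Normal_Form.Schur_Decomposition"
begin

(* Operators on a d-dimensional complex Hilbert space are d x d complex matrices. *)

definition mtrace :: "complex mat \<Rightarrow> complex" where
  "mtrace A = (\<Sum>i<dim_row A. A $$ (i, i))"

(* positive semidefinite: <v, A v> >= 0 (complex order: real and nonnegative) *)
definition psd_mat :: "nat \<Rightarrow> complex mat \<Rightarrow> bool" where
  "psd_mat n A \<longleftrightarrow> A \<in> carrier_mat n n \<and>
     (\<forall>v \<in> carrier_vec n. 0 \<le> (A *\<^sub>v v) \<bullet>c v)"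

definition is_state :: "nat \<Rightarrow> complex mat \<Rightarrow> bool" where
  "is_state n \<rho> \<longleftrightarrow> psd_mat n \<rho> \<and> mtrace \<rho> = 1"

definition is_projector :: "nat \<Rightarrow> complex mat \<Rightarrow> bool" where
  "is_projector n P \<longleftrightarrow> P \<in> carrier_mat n n \<and> P * P = P \<and> mat_adjoint P = P"

(* H~ = H (+) H_1 (+) ... (+) H_l with dim H_i = dim H = d has dimension d + l*d;
   an operator on H is extended by zero to H~ via the identity embedding of H
   as the first summand. *)
definition embed_op :: "nat \<Rightarrow> nat \<Rightarrow> complex mat \<Rightarrow> complex mat" where
  "embed_op d l A = four_block_mat A (0\<^sub>m d (l * d)) (0\<^sub>m (l * d) d) (0\<^sub>m (l * d) (l * d))"

end

theory Submission
  imports Defs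
begin


lemma adj_carrier[simp]: "A \<in> carrier_mat n m \<Longrightarrow> mat_adjoint A \<in> carrier_mat m n"
  unfolding mat_adjoint_def by auto

lemma adj_dim[simp]: "dim_row (mat_adjoint A) = dim_col A" "dim_col (mat_adjoint A) = dim_row A"
  unfolding mat_adjoint_def by auto

lemma adj_index[simp]: "i < dim_col A \<Longrightarrow> j < dim_row A \<Longrightarrow> mat_adjoint A $$ (i,j) = cnj (A $$ (j,i))"
  unfolding mat_adjoint_def by (simp add: mat_of_rows_index)

lemma adj_adj[simp]: "mat_adjoint (mat_adjoint (A::complex mat)) = A"
  by (rule eq_matI, auto)

lemma adj_mult: assumes "A \<in> carrier_mat n k" "B \<in> carrier_mat k m"
  shows "mat_adjoint ((A::complex mat) * B) = mat_adjoint B * mat_adjoint A"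
  using assms by (intro eq_matI) (auto simp: scalar_prod_def sum_conjugate intro!: sum.cong)

lemma adj_add: assumes "A \<in> carrier_mat n m" "B \<in> carrier_mat n m"
  shows "mat_adjoint ((A::complex mat) + B) = mat_adjoint A + mat_adjoint B"
  using assms by (intro eq_matI) auto

lemma adj_minus: assumes "A \<in> carrier_mat n m" "B \<in> carrier_mat n m"
  shows "mat_adjoint ((A::complex mat) - B) = mat_adjoint A - mat_adjoint B"
  using assms by (intro eq_matI) auto

lemma adj_smult: "mat_adjoint (a \<cdot>\<^sub>m (A::complex mat)) = cnj a \<cdot>\<^sub>m mat_adjoint A"
  by (intro eq_matI) auto

lemma mtrace_comm: assumes "A \<in> carrier_mat n m" "B \<in> carrier_mat m n"
  shows "mtrace ((A::complex mat) * B) = mtrace (B * A)"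
proof -
  have "mtrace (A * B) = (\<Sum>i<n. \<Sum>j<m. A $$ (i,j) * B $$ (j,i))"
    using assms unfolding mtrace_def by (auto simp: scalar_prod_def atLeast0LessThan intro!: sum.cong)
  also have "\<dots> = (\<Sum>j<m. \<Sum>i<n. B $$ (j,i) * A $$ (i,j))"
    by (subst sum.swap) (simp add: mult.commute)
  also have "\<dots> = mtrace (B * A)"
    using assms unfolding mtrace_def by (auto simp: scalar_prod_def atLeast0LessThan intro!: sum.cong)
  finally show ?thesis .
qed

lemma mtrace_add: assumes "A \<in> carrier_mat n n" "B \<in> carrier_mat n n"
  shows "mtrace ((A::complex mat) + B) = mtrace A + mtrace B"
  using assms unfolding mtrace_def by (auto simp: sum.distrib)

lemma mtrace_minus: assumes "A \<in> carrier_mat n n" "B \<in> carrier_mat n n"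
  shows "mtrace ((A::complex mat) - B) = mtrace A - mtrace B"
  using assms unfolding mtrace_def by (auto simp: sum_subtractf)

lemma mtrace_smult: "A \<in> carrier_mat n n \<Longrightarrow> mtrace (a \<cdot>\<^sub>m (A::complex mat)) = a * mtrace A"
  unfolding mtrace_def by (auto simp: sum_distrib_left)

lemma mtrace_psd: assumes "psd_mat d \<sigma>" "Y \<in> carrier_mat k d"
  shows "0 \<le> mtrace (mat_adjoint Y * Y * \<sigma>)"
proof -
  have s: "\<sigma> \<in> carrier_mat d d" using assms(1) unfolding psd_mat_def by auto
  have "mtrace (mat_adjoint Y * Y * \<sigma>) = mtrace (mat_adjoint Y * (Y * \<sigma>))"
    using assms s by (subst assoc_mult_mat[of _ d k _ d _ d]) auto
  also have "\<dots> = mtrace (Y * \<sigma> * mat_adjoint Y)"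
    using assms s by (intro mtrace_comm[of _ d k]) auto
  also have "\<dots> = (\<Sum>i<k. (\<sigma> *\<^sub>v conjugate (row Y i)) \<bullet>c conjugate (row Y i))"
    unfolding mtrace_def using assms s
  proof (intro sum.cong)
    fix i assume i: "i \<in> {..<k}"
    have "(Y * \<sigma> * mat_adjoint Y) $$ (i,i) = (\<Sum>b<d. (\<Sum>a<d. Y $$ (i,a) * \<sigma> $$ (a,b)) * cnj (Y $$ (i,b)))"
      using i assms s by (auto simp: scalar_prod_def atLeast0LessThan intro!: sum.cong)
    also have "\<dots> = (\<Sum>b<d. \<Sum>a<d. Y $$ (i,a) * \<sigma> $$ (a,b) * cnj (Y $$ (i,b)))"
      by (simp add: sum_distrib_right)
    also have "\<dots> = (\<Sum>a<d. \<Sum>b<d. Y $$ (i,a) * \<sigma> $$ (a,b) * cnj (Y $$ (i,b)))"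
      by (rule sum.swap)
    also have "\<dots> = (\<sigma> *\<^sub>v conjugate (row Y i)) \<bullet>c conjugate (row Y i)"
      using i assms s by (auto simp: scalar_prod_def atLeast0LessThan sum_distrib_left sum_distrib_right intro!: sum.cong)
    finally show "(Y * \<sigma> * mat_adjoint Y) $$ (i,i) = (\<sigma> *\<^sub>v conjugate (row Y i)) \<bullet>c conjugate (row Y i)" .
  qed (use assms s in auto)
  also have "\<dots> \<ge> 0"
  proof (intro sum_nonneg)
    fix i assume "i \<in> {..<k}"
    then have "conjugate (row Y i) \<in> carrier_vec d" using assms(2) by auto
    then show "0 \<le> (\<sigma> *\<^sub>v conjugate (row Y i)) \<bullet>c conjugate (row Y i)"
      using assms(1) unfolding psd_mat_def by blast
  qed
  finally show ?thesis .
qed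



definition outer :: "complex vec \<Rightarrow> complex vec \<Rightarrow> complex mat" where
  "outer u w = mat (dim_vec u) (dim_vec w) (\<lambda>(i,j). u $ i * cnj (w $ j))"

lemma outer_carrier[simp]: "u \<in> carrier_vec n \<Longrightarrow> w \<in> carrier_vec m \<Longrightarrow> outer u w \<in> carrier_mat n m"
  unfolding outer_def by auto

lemma outer_left: assumes "A \<in> carrier_mat n k" "u \<in> carrier_vec k" "w \<in> carrier_vec m"
  shows "A * outer u w = outer (A *\<^sub>v u) w"
  using assms unfolding outer_def
  by (intro eq_matI) (auto simp: scalar_prod_def sum_distrib_left ac_simps intro!: sum.cong)

lemma outer_right: assumes "B \<in> carrier_mat m k" "u \<in> carrier_vec n" "w \<in> carrier_vec m"
  shows "outer u w * B = outer u (mat_adjoint B *\<^sub>v w)"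
  using assms unfolding outer_def
  by (intro eq_matI) (auto simp: scalar_prod_def sum_distrib_left sum_conjugate ac_simps intro!: sum.cong)

lemma outer_mult_vec: assumes "u \<in> carrier_vec n" "w \<in> carrier_vec m" "x \<in> carrier_vec m"
  shows "outer u w *\<^sub>v x = (x \<bullet>c w) \<cdot>\<^sub>v u"
  using assms unfolding outer_def
  by (intro eq_vecI) (auto simp: scalar_prod_def sum_distrib_left ac_simps intro!: sum.cong)

lemma outer_adj: "mat_adjoint (outer u w) = outer w u"
  unfolding outer_def by (intro eq_matI) auto

lemma outer_zero[simp]: "outer (0\<^sub>v n) w = 0\<^sub>m n (dim_vec w)"
  unfolding outer_def by (intro eq_matI) auto

lemma outer_zero2[simp]: "outer u (0\<^sub>v m) = 0\<^sub>m (dim_vec u) m"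
  unfolding outer_def by (intro eq_matI) auto

lemma outer_smult2: "outer u (a \<cdot>\<^sub>v w) = cnj a \<cdot>\<^sub>m outer u w"
  unfolding outer_def by (intro eq_matI) auto

lemma outer_as_mult: assumes "R \<in> carrier_mat n m" "y \<in> carrier_vec m" "w \<in> carrier_vec k"
  shows "outer (R *\<^sub>v y) w = R * outer y w"
  using outer_left[OF assms] by simp

lemma adj_zero[simp]: "mat_adjoint (0\<^sub>m n m :: complex mat) = 0\<^sub>m m n"
  by (intro eq_matI) auto

lemma cscalar_adj: fixes A :: "complex mat" assumes "A \<in> carrier_mat n m" "x \<in> carrier_vec m" "y \<in> carrier_vec n"
  shows "(A *\<^sub>v x) \<bullet>c y = x \<bullet>c (mat_adjoint A *\<^sub>v y)"
proof -
  have "(A *\<^sub>v x) \<bullet>c y = (\<Sum>i<n. \<Sum>j<m. A $$ (i,j) * x $ j * cnj (y $ i))"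
    using assms by (auto simp: scalar_prod_def atLeast0LessThan sum_distrib_right intro!: sum.cong)
  also have "\<dots> = (\<Sum>j<m. \<Sum>i<n. A $$ (i,j) * x $ j * cnj (y $ i))" by (rule sum.swap)
  also have "\<dots> = x \<bullet>c (mat_adjoint A *\<^sub>v y)"
    using assms by (auto simp: scalar_prod_def atLeast0LessThan sum_distrib_left sum_conjugate intro!: sum.cong)
  finally show ?thesis .
qed

lemma mult_unit_vec: "(R::complex mat) \<in> carrier_mat N m \<Longrightarrow> k < m \<Longrightarrow> R *\<^sub>v unit_vec m k = col R k"
  by (intro eq_vecI) auto

lemma smult_mat_vec: "A \<in> carrier_mat n m \<Longrightarrow> v \<in> carrier_vec m \<Longrightarrow> (k \<cdot>\<^sub>m (A::complex mat)) *\<^sub>v v = k \<cdot>\<^sub>v (A *\<^sub>v v)"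
  by (intro eq_vecI) (auto simp: scalar_prod_def sum_distrib_left ac_simps)

lemma range_proj_step:
  fixes R :: "complex mat"
  assumes R: "R \<in> carrier_mat N m" and km: "k \<le> m"
  shows "\<exists>P M. P \<in> carrier_mat N N \<and> M \<in> carrier_mat m N \<and> P * P = P \<and> mat_adjoint P = P
     \<and> (\<forall>j<k. P *\<^sub>v col R j = col R j) \<and> P = R * M"
  using km
proof (induction k)
  case 0
  show ?case by (rule exI[of _ "0\<^sub>m N N :: complex mat"], rule exI[of _ "0\<^sub>m m N"]) (use R in \<open>auto\<close>)
next
  case (Suc k)
  then obtain P M where P: "P \<in> carrier_mat N N" and M: "M \<in> carrier_mat m N" and PP: "P * P = P"
    and Ph: "mat_adjoint P = P" and inv: "\<forall>j<k. P *\<^sub>v col R j = col R j" and PRM: "P = R * M" by auto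
  have k: "k < m" using Suc by auto
  define r where "r = col R k"
  have r: "r \<in> carrier_vec N" unfolding r_def using R k by auto
  define u where "u = r - P *\<^sub>v r"
  have u: "u \<in> carrier_vec N" unfolding u_def using r P by auto
  have Pu: "P *\<^sub>v u = 0\<^sub>v N"
  proof -
    have "P *\<^sub>v u = P *\<^sub>v r - P *\<^sub>v (P *\<^sub>v r)" unfolding u_def using P r by (auto simp: mult_minus_distrib_mat_vec)
    also have "P *\<^sub>v (P *\<^sub>v r) = P *\<^sub>v r" using P r PP by (metis assoc_mult_mat_vec)
    finally show ?thesis using P r by auto
  qed
  show ?case
  proof (cases "u = 0\<^sub>v N")
    case True
    have Pr: "P *\<^sub>v r = r"
    proof (rule eq_vecI)
      fix i assume "i < dim_vec r"
      then have "u $ i = 0" using True r by auto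
      then show "(P *\<^sub>v r) $ i = r $ i" using \<open>i < dim_vec r\<close> r P unfolding u_def by auto
    qed (use P r in auto)
    have "\<forall>j<Suc k. P *\<^sub>v col R j = col R j"
    proof (intro allI impI)
      fix j assume "j < Suc k"
      then consider "j < k" | "j = k" by linarith
      then show "P *\<^sub>v col R j = col R j" using inv Pr unfolding r_def by cases auto
    qed
    then show ?thesis using P M PP Ph PRM by blast
  next
    case False
    define c where "c = u \<bullet>c u"
    have c0: "c \<noteq> 0" unfolding c_def using False u by auto
    have cge: "0 \<le> c" unfolding c_def using u by auto
    have cc: "cnj c = c" using cge by (simp add: less_eq_complex_def complex_eq_iff)
    define Om where "Om = outer u u"
    have Om: "Om \<in> carrier_mat N N" unfolding Om_def using u by auto
    define P' where "P' = P + (1/c) \<cdot>\<^sub>m Om"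
    have PO: "P * Om = 0\<^sub>m N N" unfolding Om_def using outer_left[OF P u u] Pu u by simp
    have OP: "Om * P = 0\<^sub>m N N" unfolding Om_def using outer_right[OF P u u] Pu u Ph by simp
    have OO: "Om * Om = c \<cdot>\<^sub>m Om"
      unfolding Om_def using outer_right[OF outer_carrier[OF u u] u u] outer_mult_vec[OF u u u] cc
      by (simp add: outer_adj outer_smult2 c_def[symmetric])
    have P': "P' \<in> carrier_mat N N" unfolding P'_def using P Om by auto
    have OmH: "mat_adjoint Om = Om" unfolding Om_def by (simp add: outer_adj)
    have aOm: "(1/c) \<cdot>\<^sub>m Om \<in> carrier_mat N N" using Om by auto
    have aa: "((1/c) \<cdot>\<^sub>m Om) * ((1/c) \<cdot>\<^sub>m Om) = (1/c) \<cdot>\<^sub>m Om"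
      unfolding mult_smult_assoc_mat[OF Om aOm] mult_smult_distrib[OF Om Om] OO
      using c0 by (intro eq_matI) auto
    have "P' * P' = P * P + P * ((1/c) \<cdot>\<^sub>m Om) + (((1/c) \<cdot>\<^sub>m Om) * P + ((1/c) \<cdot>\<^sub>m Om) * ((1/c) \<cdot>\<^sub>m Om))"
      unfolding P'_def using P aOm
      apply (subst add_mult_distrib_mat[OF P aOm add_carrier_mat[OF aOm]])
      apply (subst mult_add_distrib_mat[OF P P aOm])
      apply (subst mult_add_distrib_mat[OF aOm P aOm]) by simp
    also have "\<dots> = P + (1/c) \<cdot>\<^sub>m Om"
      using P Om PP PO OP aa c0
      by (simp add: mult_smult_distrib[OF P Om] mult_smult_assoc_mat[OF Om P]
          mult_smult_distrib[OF _ Om] mult_smult_assoc_mat[OF Om Om] power2_eq_square)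
    finally have PP': "P' * P' = P'" unfolding P'_def .
    have adj': "mat_adjoint P' = P'"
      unfolding P'_def using P Om Ph cc by (simp add: adj_add[OF P aOm] adj_smult OmH)
    have ru: "x \<in> carrier_vec N \<Longrightarrow> P *\<^sub>v x = x \<Longrightarrow> x \<bullet>c u = 0" for x
      using cscalar_adj[OF P _ u, of x] Ph Pu by auto
    have Omr: "x \<in> carrier_vec N \<Longrightarrow> Om *\<^sub>v x = (x \<bullet>c u) \<cdot>\<^sub>v u" for x
      unfolding Om_def using outer_mult_vec[OF u u] by auto
    have P'x: "x \<in> carrier_vec N \<Longrightarrow> P' *\<^sub>v x = P *\<^sub>v x + ((1/c) * (x \<bullet>c u)) \<cdot>\<^sub>v u" for x
      unfolding P'_def using P Om Omr[of x] by (auto simp: add_mult_distrib_mat_vec smult_mat_vec[OF Om] smult_smult_assoc)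
    have cols: "\<forall>j<Suc k. P' *\<^sub>v col R j = col R j"
    proof (intro allI impI)
      fix j assume "j < Suc k"
      then consider "j < k" | "j = k" by linarith
      then show "P' *\<^sub>v col R j = col R j"
      proof cases
        case 1
        then have cj: "col R j \<in> carrier_vec N" using R k by auto
        have "P' *\<^sub>v col R j = col R j + 0 \<cdot>\<^sub>v u" using P'x[OF cj] ru[OF cj] inv 1 u by auto
        also have "col R j + 0 \<cdot>\<^sub>v u = col R j" by (intro eq_vecI) (use cj u R in auto)
        finally show ?thesis .
      next
        case 2
        have ur: "r = u + P *\<^sub>v r" unfolding u_def using r P by auto
        have "r \<bullet>c u = u \<bullet>c u + (P *\<^sub>v r) \<bullet>c u"
          by (subst ur, rule add_scalar_prod_distrib[of _ N]) (use u r P in auto)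
        also have "(P *\<^sub>v r) \<bullet>c u = 0"
          using cscalar_adj[OF P r u] Ph Pu r by auto
        finally have "r \<bullet>c u = c" unfolding c_def by simp
        then have "P' *\<^sub>v r = P *\<^sub>v r + u" using P'x[OF r] c0 by simp
        also have "\<dots> = r" unfolding u_def by (intro eq_vecI) (use r P in auto)
        finally show ?thesis unfolding 2 r_def .
      qed
    qed
    define y where "y = unit_vec m k - M *\<^sub>v r"
    have y: "y \<in> carrier_vec m" unfolding y_def using M r by auto
    have Ry: "R *\<^sub>v y = u"
      unfolding y_def u_def r_def PRM using R M k
      by (simp add: mult_minus_distrib_mat_vec[OF R] mult_unit_vec)
    have yo: "outer y u \<in> carrier_mat m N" using y u by auto
    have "R * (M + (1/c) \<cdot>\<^sub>m outer y u) = R * M + (1/c) \<cdot>\<^sub>m (R * outer y u)"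
      using R M yo by (simp add: mult_add_distrib_mat[OF R M] mult_smult_distrib[OF R yo])
    also have "\<dots> = P'" unfolding P'_def PRM Om_def
      using outer_as_mult[OF R y u] Ry by simp
    finally have RM': "P' = R * (M + (1/c) \<cdot>\<^sub>m outer y u)" ..
    have M': "M + (1/c) \<cdot>\<^sub>m outer y u \<in> carrier_mat m N" using M yo by auto
    show ?thesis using P' M' PP' adj' cols RM' by blast
  qed
qed



lemma range_proj:
  fixes R :: "complex mat"
  assumes R: "R \<in> carrier_mat N m"
  shows "\<exists>P M. P \<in> carrier_mat N N \<and> M \<in> carrier_mat m N \<and> P * P = P \<and> mat_adjoint P = P
     \<and> P * R = R \<and> P = R * M"
proof -
  obtain P M where *: "P \<in> carrier_mat N N" "M \<in> carrier_mat m N" "P * P = P" "mat_adjoint P = P"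
     "\<forall>j<m. P *\<^sub>v col R j = col R j" "P = R * M"
    using range_proj_step[OF R le_refl] by blast
  have "P * R = R"
  proof (rule eq_matI)
    fix i j assume ij: "i < dim_row R" "j < dim_col R"
    have "(P * R) $$ (i,j) = (P *\<^sub>v col R j) $ i" using ij *(1) R by auto
    also have "P *\<^sub>v col R j = col R j" using *(5) ij R by auto
    also have "col R j $ i = R $$ (i,j)" using ij R by auto
    finally show "(P * R) $$ (i,j) = R $$ (i,j)" .
  qed (use * R in auto)
  then show ?thesis using * by blast
qed

lemma sum_blocks: fixes l d :: nat shows "(\<Sum>r<l*d. f r) = (\<Sum>i<l. \<Sum>a<d. f (i*d + a))"
proof -
  have "(\<Sum>r<l*d. f r) = (\<Sum>i<l. sum f {i*d..<i*d+d})"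
    by (rule sum.nat_group[symmetric])
  also have "\<dots> = (\<Sum>i<l. \<Sum>a<d. f (i*d + a))"
  proof (rule sum.cong[OF refl])
    fix i
    have "sum f {0 + i*d..<d + i*d} = (\<Sum>a=0..<d. f (a + i*d))" by (rule sum.shift_bounds_nat_ivl)
    then show "sum f {i*d..<i*d+d} = (\<Sum>a<d. f (i*d + a))"
      by (simp add: atLeast0LessThan add.commute)
  qed
  finally show ?thesis .
qed

lemma sum_split_N: fixes d n :: nat shows "(\<Sum>r<d+n. f r) = (\<Sum>r<d. f r) + (\<Sum>r<n. f (d + r))"
  by (induction n) (auto simp: add.assoc)

lemma sum_one_block: fixes l d i :: nat
  assumes "i < l" "\<And>r. r < l*d \<Longrightarrow> r div d \<noteq> i \<Longrightarrow> f r = 0"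
  shows "(\<Sum>r<l*d. f r) = (\<Sum>a<d. f (i*d + a))"
proof -
  have "(\<Sum>r<l*d. f r) = (\<Sum>j<l. \<Sum>a<d. f (j*d + a))" by (rule sum_blocks)
  also have "\<dots> = (\<Sum>j\<in>{i}. \<Sum>a<d. f (j*d + a))"
  proof (rule sum.mono_neutral_right)
    show "\<forall>j\<in>{..<l} - {i}. (\<Sum>a<d. f (j*d + a)) = 0"
    proof
      fix j assume j: "j \<in> {..<l} - {i}"
      show "(\<Sum>a<d. f (j*d + a)) = 0"
      proof (rule sum.neutral, rule ballI)
        fix a assume a: "a \<in> {..<d}"
        have lt: "j*d + a < l*d"
        proof -
          have "j + 1 \<le> l" using j by auto
          then have "(j+1)*d \<le> l*d" by (rule mult_right_mono) simp
          then show ?thesis using a by (simp add: algebra_simps)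
        qed
        have "(j*d + a) div d = j" using a by auto
        then show "f (j*d+a) = 0" using assms(2)[OF lt] j by auto
      qed
    qed
  qed (use assms in auto)
  finally show ?thesis by simp
qed

lemma blk_lt: assumes "i < l" "a < (d::nat)" shows "i*d + a < l*d"
proof -
  have "i + 1 \<le> l" using assms by auto
  then have "(i+1)*d \<le> l*d" by (rule mult_right_mono) simp
  then show ?thesis using assms by (simp add: algebra_simps)
qed

lemma div_lt: "r < l*d \<Longrightarrow> r div d < (l::nat)"
  by (simp add: less_mult_imp_div_less)

lemma mod_lt: "r < l*d \<Longrightarrow> r mod d < (d::nat)"
  by (cases "d = 0") auto

lemma proj_sq: assumes "is_projector d P" "x < d" "c < d"
  shows "(\<Sum>a<d. P $$ (x,a) * P $$ (a,c)) = P $$ (x,c)"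
proof -
  have P: "P \<in> carrier_mat d d" and PP: "P * P = P" using assms unfolding is_projector_def by auto
  have "(P * P) $$ (x,c) = (\<Sum>a<d. P $$ (x,a) * P $$ (a,c))"
    using P assms by (auto simp: scalar_prod_def atLeast0LessThan intro!: sum.cong)
  then show ?thesis using PP by simp
qed

lemma proj_herm: assumes "is_projector d P" "x < d" "c < d"
  shows "cnj (P $$ (x,c)) = P $$ (c,x)"
proof -
  have P: "P \<in> carrier_mat d d" and PP: "mat_adjoint P = P" using assms unfolding is_projector_def by auto
  have "mat_adjoint P $$ (c,x) = cnj (P $$ (x,c))" using P assms by auto
  then show ?thesis using PP by simp
qed



definition Emb :: "nat \<Rightarrow> nat \<Rightarrow> complex mat" where
  "Emb d l = mat (d + l*d) d (\<lambda>(r,c). if r = c then 1 else 0)"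
definition Fmb :: "nat \<Rightarrow> nat \<Rightarrow> complex mat" where
  "Fmb d l = mat (d + l*d) (l*d) (\<lambda>(r,c). if r = d + c then 1 else 0)"
definition Vm :: "nat \<Rightarrow> nat \<Rightarrow> (nat \<Rightarrow> complex mat) \<Rightarrow> complex mat" where
  "Vm d l Pj = mat (l*d) d (\<lambda>(r,c). Pj (r div d) $$ (r mod d, c))"
definition Dm :: "nat \<Rightarrow> nat \<Rightarrow> (nat \<Rightarrow> complex mat) \<Rightarrow> complex mat" where
  "Dm d l Pj = mat (l*d) (l*d) (\<lambda>(r,c). if r div d = c div d then Pj (r div d) $$ (r mod d, c mod d) else 0)"
definition Gm :: "nat \<Rightarrow> nat \<Rightarrow> (nat \<Rightarrow> complex mat) \<Rightarrow> nat \<Rightarrow> complex mat" where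
  "Gm d l Pj i = mat (l*d) d (\<lambda>(r,c). if r div d = i then Pj i $$ (r mod d, c) else 0)"
definition Sm :: "nat \<Rightarrow> nat \<Rightarrow> (nat \<Rightarrow> complex mat) \<Rightarrow> complex mat" where
  "Sm d l Pj = mat d d (\<lambda>(b,c). \<Sum>i<l. Pj i $$ (b,c))"
definition Rm :: "nat \<Rightarrow> nat \<Rightarrow> (nat \<Rightarrow> complex mat) \<Rightarrow> complex \<Rightarrow> complex \<Rightarrow> complex mat" where
  "Rm d l Pj s t = mat (d + l*d) (l*d) (\<lambda>(r,c). if r < d then s * cnj (Pj (c div d) $$ (c mod d, r))
      else (if (r-d) div d = c div d then t * Pj (c div d) $$ ((r-d) mod d, c mod d) else 0))"

lemma carriers[simp]: "Emb d l \<in> carrier_mat (d+l*d) d" "Fmb d l \<in> carrier_mat (d+l*d) (l*d)"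
  "Vm d l Pj \<in> carrier_mat (l*d) d" "Dm d l Pj \<in> carrier_mat (l*d) (l*d)" "Gm d l Pj i \<in> carrier_mat (l*d) d"
  "Sm d l Pj \<in> carrier_mat d d" "Rm d l Pj s t \<in> carrier_mat (d+l*d) (l*d)"
  unfolding Emb_def Fmb_def Vm_def Dm_def Gm_def Sm_def Rm_def by auto

lemma dims[simp]: "dim_row (Emb d l) = d + l*d" "dim_col (Emb d l) = d"
  "dim_row (Fmb d l) = d + l*d" "dim_col (Fmb d l) = l*d"
  "dim_row (Vm d l Pj) = l*d" "dim_col (Vm d l Pj) = d"
  "dim_row (Dm d l Pj) = l*d" "dim_col (Dm d l Pj) = l*d"
  "dim_row (Gm d l Pj i) = l*d" "dim_col (Gm d l Pj i) = d"
  "dim_row (Sm d l Pj) = d" "dim_col (Sm d l Pj) = d"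
  "dim_row (Rm d l Pj s t) = d + l*d" "dim_col (Rm d l Pj s t) = l*d"
  unfolding Emb_def Fmb_def Vm_def Dm_def Gm_def Sm_def Rm_def by auto

lemma blk_div[simp]: "b < (d::nat) \<Longrightarrow> (j*d + b) div d = j" by auto
lemma blk_mod[simp]: "b < (d::nat) \<Longrightarrow> (j*d + b) mod d = b" by auto

lemma mult_entry: "A \<in> carrier_mat n k \<Longrightarrow> B \<in> carrier_mat k m \<Longrightarrow> i < n \<Longrightarrow> j < m \<Longrightarrow>
   (A * B) $$ (i,j) = (\<Sum>a<k. A $$ (i,a) * B $$ (a,j))"
  by (auto simp: scalar_prod_def atLeast0LessThan intro!: sum.cong)

lemma if01: "(if P then 1 else 0) * (x::complex) = (if P then x else 0)" by simp
lemma if01': "(x::complex) * (if P then 1 else 0) = (if P then x else 0)" by simp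

lemma ER: "mat_adjoint (Emb d l) * Rm d l Pj s t = s \<cdot>\<^sub>m mat_adjoint (Vm d l Pj)"
proof (rule eq_matI)
  fix i j assume ij: "i < dim_row (s \<cdot>\<^sub>m mat_adjoint (Vm d l Pj))" "j < dim_col (s \<cdot>\<^sub>m mat_adjoint (Vm d l Pj))"
  then have i: "i < d" and j: "j < l*d" by (auto simp: Vm_def)
  have "(mat_adjoint (Emb d l) * Rm d l Pj s t) $$ (i,j) = (\<Sum>r<d+l*d. (if r = i then 1 else 0) * Rm d l Pj s t $$ (r,j))"
    using i j by (subst mult_entry[of _ d "d+l*d" _ "l*d"]) (auto simp: Emb_def intro!: sum.cong)
  also have "\<dots> = Rm d l Pj s t $$ (i,j)" using i by (simp add: if01 sum.delta)
  also have "\<dots> = (s \<cdot>\<^sub>m mat_adjoint (Vm d l Pj)) $$ (i,j)" using i j by (auto simp: Rm_def Vm_def)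
  finally show "(mat_adjoint (Emb d l) * Rm d l Pj s t) $$ (i,j) = (s \<cdot>\<^sub>m mat_adjoint (Vm d l Pj)) $$ (i,j)" .
qed (auto simp: Vm_def Emb_def Rm_def)

lemma FR: "mat_adjoint (Fmb d l) * Rm d l Pj s t = t \<cdot>\<^sub>m Dm d l Pj"
proof (rule eq_matI)
  fix i j assume ij: "i < dim_row (t \<cdot>\<^sub>m Dm d l Pj)" "j < dim_col (t \<cdot>\<^sub>m Dm d l Pj)"
  then have i: "i < l*d" and j: "j < l*d" by (auto simp: Dm_def)
  have "(mat_adjoint (Fmb d l) * Rm d l Pj s t) $$ (i,j) = (\<Sum>r<d+l*d. (if r = d + i then 1 else 0) * Rm d l Pj s t $$ (r,j))"
    using i j by (subst mult_entry[of _ "l*d" "d+l*d" _ "l*d"]) (auto simp: Fmb_def intro!: sum.cong)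
  also have "\<dots> = Rm d l Pj s t $$ (d+i,j)" using i by (simp add: if01 sum.delta)
  also have "\<dots> = (t \<cdot>\<^sub>m Dm d l Pj) $$ (i,j)" using i j by (auto simp: Rm_def Dm_def)
  finally show "(mat_adjoint (Fmb d l) * Rm d l Pj s t) $$ (i,j) = (t \<cdot>\<^sub>m Dm d l Pj) $$ (i,j)" .
qed (auto simp: Dm_def Fmb_def Rm_def)

lemma EEFF: "Emb d l * mat_adjoint (Emb d l) + Fmb d l * mat_adjoint (Fmb d l) = 1\<^sub>m (d + l*d)"
proof (rule eq_matI)
  fix i j assume ij: "i < dim_row (1\<^sub>m (d + l*d) :: complex mat)" "j < dim_col (1\<^sub>m (d + l*d) :: complex mat)"
  then have i: "i < d+l*d" and j: "j < d+l*d" by auto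
  have "(Emb d l * mat_adjoint (Emb d l)) $$ (i,j) = (\<Sum>a<d. (if i = a then 1 else 0) * (if j = a then 1 else 0))"
    using i j by (subst mult_entry[of _ "d+l*d" d _ "d+l*d"]) (auto simp: Emb_def intro!: sum.cong)
  also have "\<dots> = (if i = j \<and> i < d then 1 else 0)" by (simp add: if01 sum.delta)
  finally have 1: "(Emb d l * mat_adjoint (Emb d l)) $$ (i,j) = (if i = j \<and> i < d then 1 else 0)" .
  have "(Fmb d l * mat_adjoint (Fmb d l)) $$ (i,j) = (\<Sum>a<l*d. (if i = d + a then 1 else 0) * (if j = d + a then 1 else 0))"
    using i j by (subst mult_entry[of _ "d+l*d" "l*d" _ "d+l*d"]) (auto simp: Fmb_def intro!: sum.cong)
  also have "\<dots> = (\<Sum>a<l*d. (if a = i - d then (if i = j \<and> d \<le> i then 1 else 0) else 0))"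
    by (rule sum.cong) auto
  also have "\<dots> = (if i = j \<and> d \<le> i then 1 else 0)" using i by (auto simp: sum.delta)
  finally have 2: "(Fmb d l * mat_adjoint (Fmb d l)) $$ (i,j) = (if i = j \<and> d \<le> i then 1 else 0)" .
  show "(Emb d l * mat_adjoint (Emb d l) + Fmb d l * mat_adjoint (Fmb d l)) $$ (i,j) = 1\<^sub>m (d + l*d) $$ (i,j)"
    using i j 1 2 by (auto simp: Emb_def Fmb_def)
qed (auto simp: Emb_def Fmb_def)

lemma embed_eq: assumes "A \<in> carrier_mat d d"
  shows "embed_op d l A = Emb d l * A * mat_adjoint (Emb d l)"
proof (rule eq_matI)
  fix i j assume ij: "i < dim_row (Emb d l * A * mat_adjoint (Emb d l))" "j < dim_col (Emb d l * A * mat_adjoint (Emb d l))"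
  then have i: "i < d+l*d" and j: "j < d+l*d" by (auto simp: Emb_def)
  have "(Emb d l * A * mat_adjoint (Emb d l)) $$ (i,j) = (\<Sum>b<d. (\<Sum>a<d. (if i = a then 1 else 0) * A $$ (a,b)) * (if j = b then 1 else 0))"
    using i j assms
    by (subst mult_entry[of _ "d+l*d" d _ "d+l*d"]) (auto simp: Emb_def mult_entry[of _ "d+l*d" d _ d] scalar_prod_def atLeast0LessThan intro!: sum.cong)
  also have "\<dots> = (if i < d \<and> j < d then A $$ (i,j) else 0)"
    by (simp add: if01 if01' sum.delta)
  finally show "embed_op d l A $$ (i,j) = (Emb d l * A * mat_adjoint (Emb d l)) $$ (i,j)"
    using i j assms unfolding embed_op_def by auto
qed (use assms in \<open>auto simp: embed_op_def Emb_def\<close>)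

context
  fixes d l :: nat and Pj :: "nat \<Rightarrow> complex mat"
  assumes pr: "\<And>i. i < l \<Longrightarrow> is_projector d (Pj i)"
begin

lemma DV: "Dm d l Pj * Vm d l Pj = Vm d l Pj"
proof (rule eq_matI)
  fix r c assume "r < dim_row (Vm d l Pj)" "c < dim_col (Vm d l Pj)"
  then have r: "r < l*d" and c: "c < d" by (auto simp: Vm_def)
  define i where "i = r div d"
  have il: "i < l" unfolding i_def using r by (rule div_lt)
  have rm: "r mod d < d" using r by (rule mod_lt)
  have "(Dm d l Pj * Vm d l Pj) $$ (r,c) = (\<Sum>a<l*d. Dm d l Pj $$ (r,a) * Vm d l Pj $$ (a,c))"
    using r c by (subst mult_entry[of _ "l*d" "l*d" _ d]) auto
  also have "\<dots> = (\<Sum>b<d. Dm d l Pj $$ (r,i*d+b) * Vm d l Pj $$ (i*d+b,c))"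
    by (rule sum_one_block[OF il]) (use r in \<open>auto simp: Dm_def i_def\<close>)
  also have "\<dots> = (\<Sum>b<d. Pj i $$ (r mod d, b) * Pj i $$ (b,c))"
  proof (rule sum.cong[OF refl])
    fix b assume b: "b \<in> {..<d}"
    then have lt: "i*d+b < l*d" using il by (intro blk_lt) auto
    have dv: "(i*d+b) div d = i" "(i*d+b) mod d = b" using b by auto
    show "Dm d l Pj $$ (r,i*d+b) * Vm d l Pj $$ (i*d+b,c) = Pj i $$ (r mod d, b) * Pj i $$ (b,c)"
      using r c lt dv unfolding Dm_def Vm_def by (simp add: i_def)
  qed
  also have "\<dots> = Pj i $$ (r mod d, c)" using proj_sq[OF pr[OF il] rm c] .
  finally show "(Dm d l Pj * Vm d l Pj) $$ (r,c) = Vm d l Pj $$ (r,c)" using r c by (simp add: Vm_def i_def)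
qed (auto simp: Vm_def Dm_def)

lemma Dadj: "mat_adjoint (Dm d l Pj) = Dm d l Pj"
proof (rule eq_matI)
  fix r c assume "r < dim_row (Dm d l Pj)" "c < dim_col (Dm d l Pj)"
  then have r: "r < l*d" and c: "c < l*d" by (auto simp: Dm_def)
  have il: "r div d < l" using r by (rule div_lt)
  show "mat_adjoint (Dm d l Pj) $$ (r,c) = Dm d l Pj $$ (r,c)"
    using r c proj_herm[OF pr[OF il] mod_lt[OF c] mod_lt[OF r]] by (auto simp: Dm_def)
qed (auto simp: Dm_def)

lemma DD: "Dm d l Pj * Dm d l Pj = Dm d l Pj"
proof (rule eq_matI)
  fix r c assume "r < dim_row (Dm d l Pj)" "c < dim_col (Dm d l Pj)"
  then have r: "r < l*d" and c: "c < l*d" by (auto simp: Dm_def)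
  define i where "i = r div d"
  have il: "i < l" unfolding i_def using r by (rule div_lt)
  have rm: "r mod d < d" using r by (rule mod_lt)
  have cm: "c mod d < d" using c by (rule mod_lt)
  have "(Dm d l Pj * Dm d l Pj) $$ (r,c) = (\<Sum>a<l*d. Dm d l Pj $$ (r,a) * Dm d l Pj $$ (a,c))"
    using r c by (subst mult_entry[of _ "l*d" "l*d" _ "l*d"]) auto
  also have "\<dots> = (\<Sum>b<d. Dm d l Pj $$ (r,i*d+b) * Dm d l Pj $$ (i*d+b,c))"
    by (rule sum_one_block[OF il]) (use r in \<open>auto simp: Dm_def i_def\<close>)
  also have "\<dots> = (\<Sum>b<d. (if i = c div d then Pj i $$ (r mod d, b) * Pj i $$ (b,c mod d) else 0))"
  proof (rule sum.cong[OF refl])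
    fix b assume b: "b \<in> {..<d}"
    then have lt: "i*d+b < l*d" using il by (intro blk_lt) auto
    have dv: "(i*d+b) div d = i" "(i*d+b) mod d = b" using b by auto
    show "Dm d l Pj $$ (r,i*d+b) * Dm d l Pj $$ (i*d+b,c) = (if i = c div d then Pj i $$ (r mod d, b) * Pj i $$ (b,c mod d) else 0)"
      using r c lt dv b unfolding Dm_def by (simp add: i_def)
  qed
  also have "\<dots> = (if i = c div d then Pj i $$ (r mod d, c mod d) else 0)"
    using proj_sq[OF pr[OF il] rm cm] by auto
  finally show "(Dm d l Pj * Dm d l Pj) $$ (r,c) = Dm d l Pj $$ (r,c)" using r c by (simp add: Dm_def i_def)
qed (auto simp: Dm_def)

lemma VV: "mat_adjoint (Vm d l Pj) * Vm d l Pj = Sm d l Pj"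
proof (rule eq_matI)
  fix b c assume "b < dim_row (Sm d l Pj)" "c < dim_col (Sm d l Pj)"
  then have b: "b < d" and c: "c < d" by (auto simp: Sm_def)
  have "(mat_adjoint (Vm d l Pj) * Vm d l Pj) $$ (b,c) = (\<Sum>r<l*d. cnj (Vm d l Pj $$ (r,b)) * Vm d l Pj $$ (r,c))"
    using b c by (subst mult_entry[of _ d "l*d" _ d]) (auto intro!: sum.cong)
  also have "\<dots> = (\<Sum>i<l. \<Sum>a<d. cnj (Vm d l Pj $$ (i*d+a,b)) * Vm d l Pj $$ (i*d+a,c))"
    by (rule sum_blocks)
  also have "\<dots> = (\<Sum>i<l. Pj i $$ (b,c))"
  proof (rule sum.cong[OF refl])
    fix i assume "i \<in> {..<l}"
    then have il: "i < l" by auto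
    have "(\<Sum>a<d. cnj (Vm d l Pj $$ (i*d+a,b)) * Vm d l Pj $$ (i*d+a,c)) = (\<Sum>a<d. Pj i $$ (b,a) * Pj i $$ (a,c))"
    proof (rule sum.cong[OF refl])
      fix a assume a: "a \<in> {..<d}"
      then have lt: "i*d+a < l*d" using il by (intro blk_lt) auto
      have dv: "(i*d+a) div d = i" "(i*d+a) mod d = a" using a by auto
      show "cnj (Vm d l Pj $$ (i*d+a,b)) * Vm d l Pj $$ (i*d+a,c) = Pj i $$ (b,a) * Pj i $$ (a,c)"
        using lt dv b c a proj_herm[OF pr[OF il], of a b] unfolding Vm_def by simp
    qed
    also have "\<dots> = Pj i $$ (b,c)" using proj_sq[OF pr[OF il] b c] .
    finally show "(\<Sum>a<d. cnj (Vm d l Pj $$ (i*d+a,b)) * Vm d l Pj $$ (i*d+a,c)) = Pj i $$ (b,c)" .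
  qed
  finally show "(mat_adjoint (Vm d l Pj) * Vm d l Pj) $$ (b,c) = Sm d l Pj $$ (b,c)" using b c by (simp add: Sm_def)
qed (auto simp: Sm_def Vm_def)

lemma GV: assumes il: "i < l" shows "mat_adjoint (Gm d l Pj i) * Vm d l Pj = Pj i"
proof (rule eq_matI)
  have P: "Pj i \<in> carrier_mat d d" using pr[OF il] unfolding is_projector_def by auto
  fix b c assume "b < dim_row (Pj i)" "c < dim_col (Pj i)"
  then have b: "b < d" and c: "c < d" using P by auto
  have "(mat_adjoint (Gm d l Pj i) * Vm d l Pj) $$ (b,c) = (\<Sum>r<l*d. cnj (Gm d l Pj i $$ (r,b)) * Vm d l Pj $$ (r,c))"
    using b c by (subst mult_entry[of _ d "l*d" _ d]) (auto intro!: sum.cong)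
  also have "\<dots> = (\<Sum>a<d. cnj (Gm d l Pj i $$ (i*d+a,b)) * Vm d l Pj $$ (i*d+a,c))"
    by (rule sum_one_block[OF il]) (use b in \<open>auto simp: Gm_def\<close>)
  also have "\<dots> = (\<Sum>a<d. Pj i $$ (b,a) * Pj i $$ (a,c))"
  proof (rule sum.cong[OF refl])
    fix a assume a: "a \<in> {..<d}"
    then have lt: "i*d+a < l*d" using il by (intro blk_lt) auto
    have dv: "(i*d+a) div d = i" "(i*d+a) mod d = a" using a by auto
    show "cnj (Gm d l Pj i $$ (i*d+a,b)) * Vm d l Pj $$ (i*d+a,c) = Pj i $$ (b,a) * Pj i $$ (a,c)"
      using lt dv b c a proj_herm[OF pr[OF il], of a b] unfolding Vm_def Gm_def by simp
  qed
  also have "\<dots> = Pj i $$ (b,c)" using proj_sq[OF pr[OF il] b c] .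
  finally show "(mat_adjoint (Gm d l Pj i) * Vm d l Pj) $$ (b,c) = Pj i $$ (b,c)" .
qed (use pr[OF il] in \<open>auto simp: Gm_def Vm_def is_projector_def\<close>)

lemma GG: assumes il: "i < l" shows "mat_adjoint (Gm d l Pj i) * Gm d l Pj i = Pj i"
proof (rule eq_matI)
  have P: "Pj i \<in> carrier_mat d d" using pr[OF il] unfolding is_projector_def by auto
  fix b c assume "b < dim_row (Pj i)" "c < dim_col (Pj i)"
  then have b: "b < d" and c: "c < d" using P by auto
  have "(mat_adjoint (Gm d l Pj i) * Gm d l Pj i) $$ (b,c) = (\<Sum>r<l*d. cnj (Gm d l Pj i $$ (r,b)) * Gm d l Pj i $$ (r,c))"
    using b c by (subst mult_entry[of _ d "l*d" _ d]) (auto intro!: sum.cong)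
  also have "\<dots> = (\<Sum>a<d. cnj (Gm d l Pj i $$ (i*d+a,b)) * Gm d l Pj i $$ (i*d+a,c))"
    by (rule sum_one_block[OF il]) (use b in \<open>auto simp: Gm_def\<close>)
  also have "\<dots> = (\<Sum>a<d. Pj i $$ (b,a) * Pj i $$ (a,c))"
  proof (rule sum.cong[OF refl])
    fix a assume a: "a \<in> {..<d}"
    then have lt: "i*d+a < l*d" using il by (intro blk_lt) auto
    have dv: "(i*d+a) div d = i" "(i*d+a) mod d = a" using a by auto
    show "cnj (Gm d l Pj i $$ (i*d+a,b)) * Gm d l Pj i $$ (i*d+a,c) = Pj i $$ (b,a) * Pj i $$ (a,c)"
      using lt dv b c a proj_herm[OF pr[OF il], of a b] unfolding Gm_def by simp
  qed
  also have "\<dots> = Pj i $$ (b,c)" using proj_sq[OF pr[OF il] b c] .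
  finally show "(mat_adjoint (Gm d l Pj i) * Gm d l Pj i) $$ (b,c) = Pj i $$ (b,c)" .
qed (use pr[OF il] in \<open>auto simp: Gm_def is_projector_def\<close>)

lemma GP: assumes il: "i < l" shows "Gm d l Pj i * Pj i = Gm d l Pj i"
proof (rule eq_matI)
  have P: "Pj i \<in> carrier_mat d d" using pr[OF il] unfolding is_projector_def by auto
  fix r c assume "r < dim_row (Gm d l Pj i)" "c < dim_col (Gm d l Pj i)"
  then have r: "r < l*d" and c: "c < d" by (auto simp: Gm_def)
  have rm: "r mod d < d" using r by (rule mod_lt)
  have "(Gm d l Pj i * Pj i) $$ (r,c) = (\<Sum>b<d. Gm d l Pj i $$ (r,b) * Pj i $$ (b,c))"
    using r c P by (subst mult_entry[of _ "l*d" d _ d]) auto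
  also have "\<dots> = (\<Sum>b<d. if r div d = i then Pj i $$ (r mod d,b) * Pj i $$ (b,c) else 0)"
    using r by (intro sum.cong) (auto simp: Gm_def)
  also have "\<dots> = Gm d l Pj i $$ (r,c)"
    using proj_sq[OF pr[OF il] rm c] r c by (auto simp: Gm_def)
  finally show "(Gm d l Pj i * Pj i) $$ (r,c) = Gm d l Pj i $$ (r,c)" .
qed (use pr[OF il] in \<open>auto simp: Gm_def is_projector_def\<close>)

lemma DG: assumes il: "i < l" shows "Dm d l Pj * Gm d l Pj i = Gm d l Pj i"
proof (rule eq_matI)
  fix r c assume "r < dim_row (Gm d l Pj i)" "c < dim_col (Gm d l Pj i)"
  then have r: "r < l*d" and c: "c < d" by (auto simp: Gm_def)
  have rm: "r mod d < d" using r by (rule mod_lt)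
  have "(Dm d l Pj * Gm d l Pj i) $$ (r,c) = (\<Sum>a<l*d. Dm d l Pj $$ (r,a) * Gm d l Pj i $$ (a,c))"
    using r c by (subst mult_entry[of _ "l*d" "l*d" _ d]) auto
  also have "\<dots> = (\<Sum>b<d. Dm d l Pj $$ (r,i*d+b) * Gm d l Pj i $$ (i*d+b,c))"
    by (rule sum_one_block[OF il]) (use r c in \<open>auto simp: Gm_def\<close>)
  also have "\<dots> = (\<Sum>b<d. (if r div d = i then Pj i $$ (r mod d, b) * Pj i $$ (b,c) else 0))"
  proof (rule sum.cong[OF refl])
    fix b assume b: "b \<in> {..<d}"
    then have lt: "i*d+b < l*d" using il by (intro blk_lt) auto
    have dv: "(i*d+b) div d = i" "(i*d+b) mod d = b" using b by auto
    show "Dm d l Pj $$ (r,i*d+b) * Gm d l Pj i $$ (i*d+b,c) = (if r div d = i then Pj i $$ (r mod d, b) * Pj i $$ (b,c) else 0)"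
      using r c lt dv unfolding Dm_def Gm_def by simp
  qed
  also have "\<dots> = Gm d l Pj i $$ (r,c)"
    using proj_sq[OF pr[OF il] rm c] r c by (auto simp: Gm_def)
  finally show "(Dm d l Pj * Gm d l Pj i) $$ (r,c) = Gm d l Pj i $$ (r,c)" .
qed (auto simp: Gm_def Dm_def)

end



lemma sm_mult: "A \<in> carrier_mat n k \<Longrightarrow> B \<in> carrier_mat k m \<Longrightarrow>
   (a \<cdot>\<^sub>m A) * (b \<cdot>\<^sub>m (B::complex mat)) = (a*b) \<cdot>\<^sub>m (A*B)"
  by (intro eq_matI) (auto simp: scalar_prod_def sum_distrib_left ac_simps)

lemma one_sm[simp]: "1 \<cdot>\<^sub>m (A::complex mat) = A"
  by (intro eq_matI) auto

lemma sm_sm: "a \<cdot>\<^sub>m (b \<cdot>\<^sub>m (A::complex mat)) = (a*b) \<cdot>\<^sub>m A"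
  by (intro eq_matI) auto

lemma trace_S: assumes "\<sigma> \<in> carrier_mat d d" "\<And>i. i < l \<Longrightarrow> Pj i \<in> carrier_mat d d"
  shows "mtrace (Sm d l Pj * \<sigma>) = (\<Sum>i<l. mtrace (Pj i * \<sigma>))"
proof -
  have "mtrace (Sm d l Pj * \<sigma>) = (\<Sum>b<d. \<Sum>c<d. (\<Sum>i<l. Pj i $$ (b,c)) * \<sigma> $$ (c,b))"
    using assms unfolding mtrace_def by (auto simp: Sm_def scalar_prod_def atLeast0LessThan intro!: sum.cong)
  also have "\<dots> = (\<Sum>i<l. \<Sum>b<d. \<Sum>c<d. Pj i $$ (b,c) * \<sigma> $$ (c,b))"
    by (simp add: sum_distrib_right sum.swap[of _ "{..<l}"])
  also have "\<dots> = (\<Sum>i<l. mtrace (Pj i * \<sigma>))"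
  proof (rule sum.cong[OF refl])
    fix i assume "i \<in> {..<l}"
    then have P: "Pj i \<in> carrier_mat d d" using assms(2) by auto
    then show "(\<Sum>b<d. \<Sum>c<d. Pj i $$ (b,c) * \<sigma> $$ (c,b)) = mtrace (Pj i * \<sigma>)"
      using assms(1) unfolding mtrace_def by (auto simp: scalar_prod_def atLeast0LessThan intro!: sum.cong)
  qed
  finally show ?thesis .
qed

lemma adj_expand: assumes "A \<in> carrier_mat n k" "B \<in> carrier_mat n k"
  shows "mat_adjoint ((A::complex mat) - B) * (A - B) = mat_adjoint A * A - mat_adjoint A * B - mat_adjoint B * A + mat_adjoint B * B"
  using assms by (intro eq_matI) (auto simp: scalar_prod_def sum_subtractf sum.distrib algebra_simps)

lemma trace_embed:
  assumes Ph: "Ph \<in> carrier_mat N N" and E: "E \<in> carrier_mat N d" and r: "\<rho> \<in> carrier_mat d d"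
    and emb: "embed_op d l \<rho> = E * \<rho> * mat_adjoint E"
  shows "mtrace (Ph * embed_op d l \<rho>) = mtrace (mat_adjoint E * Ph * E * \<rho>)"
proof -
  have "Ph * embed_op d l \<rho> = (Ph * E * \<rho>) * mat_adjoint E"
    unfolding emb using assoc_mult_mat[OF Ph mult_carrier_mat[OF E r] adj_carrier[OF E]]
      assoc_mult_mat[OF Ph E r] by simp
  then have "mtrace (Ph * embed_op d l \<rho>) = mtrace (mat_adjoint E * (Ph * E * \<rho>))"
    using mtrace_comm[OF mult_carrier_mat[OF mult_carrier_mat[OF Ph E] r] adj_carrier[OF E]] by simp
  also have "mat_adjoint E * (Ph * E * \<rho>) = mat_adjoint E * Ph * E * \<rho>"
    using assoc_mult_mat[OF adj_carrier[OF E] Ph E] assoc_mult_mat[OF adj_carrier[OF E] mult_carrier_mat[OF Ph E] r]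
      assoc_mult_mat[OF mult_carrier_mat[OF adj_carrier[OF E] Ph] E r] by simp
  finally show ?thesis .
qed

theorem corollary2:
  fixes d l :: nat and \<alpha> \<epsilon> :: real
    and \<rho> Proj :: "nat \<Rightarrow> complex mat"
  assumes "0 < \<alpha>" and "\<alpha> < 1" and "0 \<le> \<epsilon>"
    and "\<And>i. i < l \<Longrightarrow> is_state d (\<rho> i)"
    and "\<And>i. i < l \<Longrightarrow> is_projector d (Proj i)"
    and "\<And>i. i < l \<Longrightarrow> complex_of_real (1 - \<epsilon>) \<le> mtrace (Proj i * \<rho> i)"
  shows "\<exists>Ph. is_projector (d + l * d) Ph
           \<and> (\<forall>i < l. complex_of_real (1 - \<epsilon> - \<alpha>) \<le> mtrace (Ph * embed_op d l (\<rho> i)))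
           \<and> (\<forall>\<sigma>. is_state d \<sigma> \<longrightarrow>
                mtrace (Ph * embed_op d l \<sigma>)
                  \<le> complex_of_real ((1 - \<alpha>) / \<alpha>) * (\<Sum>i<l. mtrace (Proj i * \<sigma>)))"
proof -
  note pr = assms(5)
  define N where "N = d + l*d"
  define L where "L = l*d"
  define s where "s = complex_of_real (sqrt (1 - \<alpha>))"
  define t where "t = complex_of_real (sqrt \<alpha>)"
  have cs: "cnj s = s" and ct: "cnj t = t" unfolding s_def t_def by auto
  have ss: "s * s = complex_of_real (1 - \<alpha>)" unfolding s_def using assms(2)
    by (simp flip: of_real_mult)
  have tt: "t * t = complex_of_real \<alpha>" unfolding t_def using assms(1)
    by (simp flip: of_real_mult)
  have s0: "s \<noteq> 0" unfolding s_def using assms(2) by auto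
  have t0: "t \<noteq> 0" unfolding t_def using assms(1) by auto
  have sstt: "s * s + t * t = 1" using ss tt by (simp flip: of_real_add)
  define E where "E = Emb d l"
  define F where "F = Fmb d l"
  define V where "V = Vm d l Proj"
  define D where "D = Dm d l Proj"
  define R where "R = Rm d l Proj s t"
  have E: "E \<in> carrier_mat N d" and F: "F \<in> carrier_mat N L" and V: "V \<in> carrier_mat L d"
    and D: "D \<in> carrier_mat L L" and R: "R \<in> carrier_mat N L"
    unfolding E_def F_def V_def D_def R_def N_def L_def by auto
  have ER': "mat_adjoint E * R = s \<cdot>\<^sub>m mat_adjoint V" unfolding E_def R_def V_def by (rule ER)
  have FR': "mat_adjoint F * R = t \<cdot>\<^sub>m D" unfolding F_def R_def D_def by (rule FR)
  have EEFF': "E * mat_adjoint E + F * mat_adjoint F = 1\<^sub>m N" unfolding E_def F_def N_def by (rule EEFF)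
  have DV': "D * V = V" unfolding D_def V_def by (rule DV[OF pr])
  have DD': "D * D = D" unfolding D_def by (rule DD[OF pr])
  have Dadj': "mat_adjoint D = D" unfolding D_def by (rule Dadj[OF pr])
  have RE: "mat_adjoint R * E = s \<cdot>\<^sub>m V"
  proof -
    have "mat_adjoint R * E = mat_adjoint (mat_adjoint E * R)"
      using adj_mult[of "mat_adjoint E" d N R L] E R by simp
    also have "\<dots> = s \<cdot>\<^sub>m V" unfolding ER' adj_smult cs by simp
    finally show ?thesis .
  qed
  have RF: "mat_adjoint R * F = t \<cdot>\<^sub>m D"
  proof -
    have "mat_adjoint R * F = mat_adjoint (mat_adjoint F * R)"
      using adj_mult[of "mat_adjoint F" L N R L] F R by simp
    also have "\<dots> = t \<cdot>\<^sub>m D" unfolding FR' adj_smult ct Dadj' by simp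
    finally show ?thesis .
  qed
  have RR: "mat_adjoint R * R = (s*s) \<cdot>\<^sub>m (V * mat_adjoint V) + (t*t) \<cdot>\<^sub>m D"
  proof -
    have "mat_adjoint R * R = mat_adjoint R * ((E * mat_adjoint E + F * mat_adjoint F) * R)"
      unfolding EEFF' using R by simp
    also have "\<dots> = mat_adjoint R * (E * (mat_adjoint E * R) + F * (mat_adjoint F * R))"
      using E F R by (simp add: add_mult_distrib_mat[of _ N N] assoc_mult_mat[OF E adj_carrier[OF E] R]
         assoc_mult_mat[OF F adj_carrier[OF F] R])
    also have "\<dots> = (mat_adjoint R * E) * (mat_adjoint E * R) + (mat_adjoint R * F) * (mat_adjoint F * R)"
    proof -
      have c1: "E * (mat_adjoint E * R) \<in> carrier_mat N L" using E R by auto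
      have c2: "F * (mat_adjoint F * R) \<in> carrier_mat N L" using F R by auto
      have c3: "mat_adjoint E * R \<in> carrier_mat d L" using E R by auto
      have c4: "mat_adjoint F * R \<in> carrier_mat L L" using F R by auto
      show ?thesis by (simp add: mult_add_distrib_mat[OF adj_carrier[OF R] c1 c2]
        assoc_mult_mat[OF adj_carrier[OF R] E c3] assoc_mult_mat[OF adj_carrier[OF R] F c4])
    qed
    also have "\<dots> = (s*s) \<cdot>\<^sub>m (V * mat_adjoint V) + (t*t) \<cdot>\<^sub>m (D * D)"
      unfolding RE RF ER' FR' using V D by (simp add: sm_mult[OF V adj_carrier[OF V]] sm_mult[OF D D])
    finally show ?thesis unfolding DD' .
  qed
  obtain Ph M where Ph: "Ph \<in> carrier_mat N N" and M: "M \<in> carrier_mat L N" and PhPh: "Ph * Ph = Ph"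
    and PhH: "mat_adjoint Ph = Ph" and PhR: "Ph * R = R" and PhRM: "Ph = R * M"
    using range_proj[OF R] by blast
  have proj: "is_projector (d + l * d) Ph" using Ph PhPh PhH unfolding is_projector_def N_def by auto
  have cond1: "\<forall>i < l. complex_of_real (1 - \<epsilon> - \<alpha>) \<le> mtrace (Ph * embed_op d l (\<rho> i))"
  proof (intro allI impI)
    fix i assume il: "i < l"
    define P where "P = Proj i"
    have P: "P \<in> carrier_mat d d" and PP: "P * P = P" and PH: "mat_adjoint P = P"
      using pr[OF il] unfolding P_def is_projector_def by auto
    define G where "G = Gm d l Proj i"
    have G: "G \<in> carrier_mat L d" unfolding G_def L_def by simp
    have GV': "mat_adjoint G * V = P" unfolding G_def V_def P_def by (rule GV[OF pr il])
    have DG': "D * G = G" unfolding G_def D_def by (rule DG[OF pr il])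
    have GG': "mat_adjoint G * G = P" unfolding G_def P_def by (rule GG[OF pr il])
    have GP': "G * P = G" unfolding G_def P_def by (rule GP[OF pr il])
    have VG: "mat_adjoint V * G = P"
    proof -
      have "mat_adjoint V * G = mat_adjoint (mat_adjoint G * V)"
        using adj_mult[OF adj_carrier[OF G] V] by simp
      then show ?thesis using GV' PH by simp
    qed
    define X where "X = R * G"
    have X: "X \<in> carrier_mat N d" unfolding X_def using R G by simp
    have EX: "mat_adjoint E * X = s \<cdot>\<^sub>m P"
    proof -
      have "mat_adjoint E * X = (mat_adjoint E * R) * G"
        unfolding X_def using assoc_mult_mat[OF adj_carrier[OF E] R G] by simp
      also have "\<dots> = s \<cdot>\<^sub>m (mat_adjoint V * G)" unfolding ER' using mult_smult_assoc_mat[OF adj_carrier[OF V] G] .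
      finally show ?thesis unfolding VG .
    qed
    have XX: "mat_adjoint X * X = P"
    proof -
      have "mat_adjoint X * X = mat_adjoint G * ((mat_adjoint R * R) * G)"
        unfolding X_def adj_mult[OF R G]
        using assoc_mult_mat[OF adj_carrier[OF G] adj_carrier[OF R] mult_carrier_mat[OF R G]]
          assoc_mult_mat[OF adj_carrier[OF R] R G] by simp
      also have "(mat_adjoint R * R) * G = (s*s) \<cdot>\<^sub>m (V * (mat_adjoint V * G)) + (t*t) \<cdot>\<^sub>m (D * G)"
        unfolding RR
        using add_mult_distrib_mat[OF smult_carrier_mat[OF mult_carrier_mat[OF V adj_carrier[OF V]]] smult_carrier_mat[OF D] G]
          mult_smult_assoc_mat[OF mult_carrier_mat[OF V adj_carrier[OF V]] G] mult_smult_assoc_mat[OF D G]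
          assoc_mult_mat[OF V adj_carrier[OF V] G] by simp
      also have "\<dots> = (s*s) \<cdot>\<^sub>m (V * P) + (t*t) \<cdot>\<^sub>m G" unfolding VG DG' ..
      also have "mat_adjoint G * \<dots> = (s*s) \<cdot>\<^sub>m (mat_adjoint G * V * P) + (t*t) \<cdot>\<^sub>m (mat_adjoint G * G)"
        using mult_add_distrib_mat[OF adj_carrier[OF G] smult_carrier_mat[OF mult_carrier_mat[OF V P]] smult_carrier_mat[OF G]]
          mult_smult_distrib[OF adj_carrier[OF G] mult_carrier_mat[OF V P]] mult_smult_distrib[OF adj_carrier[OF G] G]
          assoc_mult_mat[OF adj_carrier[OF G] V P] by simp
      also have "\<dots> = (s*s + t*t) \<cdot>\<^sub>m P" unfolding GV' GG' PP using add_smult_distrib_right_mat[OF P] by simp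
      finally show ?thesis unfolding sstt by simp
    qed
    have PhX: "Ph * X = X" unfolding X_def using assoc_mult_mat[OF Ph R G, symmetric] PhR by simp
    have XP: "X * P = X" unfolding X_def using assoc_mult_mat[OF R G P] GP' by simp
    define Q where "Q = X * mat_adjoint X"
    have Q: "Q \<in> carrier_mat N N" unfolding Q_def using X by simp
    have aX: "mat_adjoint X \<in> carrier_mat d N" using X by simp
    have QQ: "Q * Q = Q"
    proof -
      have "Q * Q = X * ((mat_adjoint X * X) * mat_adjoint X)"
        unfolding Q_def using assoc_mult_mat[OF X aX mult_carrier_mat[OF X aX]] assoc_mult_mat[OF aX X aX] by simp
      also have "\<dots> = (X * P) * mat_adjoint X" unfolding XX using assoc_mult_mat[OF X P aX] by simp
      finally show ?thesis unfolding XP Q_def .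
    qed
    have PhQ: "Ph * Q = Q" unfolding Q_def using assoc_mult_mat[OF Ph X aX, symmetric] PhX by simp
    have XPh: "mat_adjoint X * Ph = mat_adjoint X"
      using adj_mult[OF Ph X] PhH PhX by simp
    have QPh: "Q * Ph = Q" unfolding Q_def using assoc_mult_mat[OF X aX Ph] XPh by simp
    have QH: "mat_adjoint Q = Q" unfolding Q_def using adj_mult[OF X aX] by simp
    define W where "W = Ph - Q"
    have W: "W \<in> carrier_mat N N" unfolding W_def using Ph Q by (simp add: minus_carrier_mat)
    have WH: "mat_adjoint W = W" unfolding W_def using adj_minus[OF Ph Q] PhH QH by simp
    have WW: "mat_adjoint W * W = W"
    proof -
      have "W * W = Ph * (Ph - Q) - Q * (Ph - Q)" unfolding W_def
        using minus_mult_distrib_mat[OF Ph Q minus_carrier_mat[OF Q]] by simp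
      also have "\<dots> = (Ph * Ph - Ph * Q) - (Q * Ph - Q * Q)"
        using mult_minus_distrib_mat[OF Ph Ph Q] mult_minus_distrib_mat[OF Q Ph Q] by simp
      also have "\<dots> = W" unfolding PhPh PhQ QPh QQ W_def using Ph Q by (intro eq_matI) auto
      finally show ?thesis unfolding WH .
    qed
    have aE: "mat_adjoint E \<in> carrier_mat d N" using E by simp
    have XE: "mat_adjoint X * E = s \<cdot>\<^sub>m P"
      using adj_mult[OF aE X] EX adj_smult[of s P] PH cs by simp
    have EQE: "mat_adjoint E * Q * E = complex_of_real (1 - \<alpha>) \<cdot>\<^sub>m P"
    proof -
      have "mat_adjoint E * Q * E = (mat_adjoint E * X) * (mat_adjoint X * E)"
        unfolding Q_def using assoc_mult_mat[OF aE X aX] assoc_mult_mat[OF aE mult_carrier_mat[OF X aX] E]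
          assoc_mult_mat[OF mult_carrier_mat[OF aE X] aX E] by simp
      also have "\<dots> = (s * s) \<cdot>\<^sub>m (P * P)" unfolding EX XE using sm_mult[OF P P] .
      finally show ?thesis unfolding PP ss .
    qed
    have PhWQ: "Ph = W + Q" unfolding W_def using Ph Q by (intro eq_matI) auto
    have EPhE: "mat_adjoint E * Ph * E = mat_adjoint (W * E) * (W * E) + complex_of_real (1 - \<alpha>) \<cdot>\<^sub>m P"
    proof -
      have "mat_adjoint E * Ph * E = mat_adjoint E * W * E + mat_adjoint E * Q * E"
        unfolding PhWQ using mult_add_distrib_mat[OF aE W Q] add_mult_distrib_mat[OF mult_carrier_mat[OF aE W] mult_carrier_mat[OF aE Q] E]
        by simp
      also have "mat_adjoint E * W * E = mat_adjoint (W * E) * (W * E)"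
      proof -
        have "mat_adjoint (W * E) * (W * E) = mat_adjoint E * (mat_adjoint W * W) * E"
          using adj_mult[OF W E] assoc_mult_mat[OF aE adj_carrier[OF W] mult_carrier_mat[OF W E]]
            assoc_mult_mat[OF adj_carrier[OF W] W E] assoc_mult_mat[OF aE mult_carrier_mat[OF adj_carrier[OF W] W] E] by simp
        then show ?thesis unfolding WW by simp
      qed
      finally show ?thesis unfolding EQE .
    qed
    have rho: "psd_mat d (\<rho> i)" "\<rho> i \<in> carrier_mat d d" using assms(4)[OF il] unfolding is_state_def psd_mat_def by auto
    have "mtrace (Ph * embed_op d l (\<rho> i)) = mtrace (mat_adjoint E * Ph * E * \<rho> i)"
      by (rule trace_embed[OF Ph E rho(2)]) (unfold E_def, rule embed_eq[OF rho(2)])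
    also have "\<dots> = mtrace (mat_adjoint (W * E) * (W * E) * \<rho> i) + complex_of_real (1 - \<alpha>) * mtrace (P * \<rho> i)"
      unfolding EPhE
      using add_mult_distrib_mat[OF mult_carrier_mat[OF adj_carrier[OF mult_carrier_mat[OF W E]] mult_carrier_mat[OF W E]] smult_carrier_mat[OF P] rho(2)]
        mtrace_add[OF mult_carrier_mat[OF mult_carrier_mat[OF adj_carrier[OF mult_carrier_mat[OF W E]] mult_carrier_mat[OF W E]] rho(2)]
          mult_carrier_mat[OF smult_carrier_mat[OF P] rho(2)]]
        mult_smult_assoc_mat[OF P rho(2)] mtrace_smult[OF mult_carrier_mat[OF P rho(2)]] by simp
    finally have eq: "mtrace (Ph * embed_op d l (\<rho> i)) = mtrace (mat_adjoint (W * E) * (W * E) * \<rho> i) + complex_of_real (1 - \<alpha>) * mtrace (P * \<rho> i)" .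
    have nn: "0 \<le> mtrace (mat_adjoint (W * E) * (W * E) * \<rho> i)"
      using mtrace_psd[OF rho(1), of "W * E" N] W E by simp
    have h6: "complex_of_real (1 - \<epsilon>) \<le> mtrace (P * \<rho> i)" using assms(6)[OF il] unfolding P_def .
    have "complex_of_real (1 - \<alpha>) * complex_of_real (1 - \<epsilon>) \<le> complex_of_real (1 - \<alpha>) * mtrace (P * \<rho> i)"
      by (rule mult_left_mono[OF h6]) (use assms(2) in \<open>simp add: less_eq_complex_def\<close>)
    moreover have "complex_of_real (1 - \<epsilon> - \<alpha>) \<le> complex_of_real (1 - \<alpha>) * complex_of_real (1 - \<epsilon>)"
      using assms(1,3) by (simp add: less_eq_complex_def algebra_simps)
    ultimately show "complex_of_real (1 - \<epsilon> - \<alpha>) \<le> mtrace (Ph * embed_op d l (\<rho> i))"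
      unfolding eq using nn by (meson add_increasing order_trans)
  qed
  have cond2: "\<forall>\<sigma>. is_state d \<sigma> \<longrightarrow>
                mtrace (Ph * embed_op d l \<sigma>)
                  \<le> complex_of_real ((1 - \<alpha>) / \<alpha>) * (\<Sum>i<l. mtrace (Proj i * \<sigma>))"
  proof (intro allI impI)
    fix \<sigma> assume st: "is_state d \<sigma>"
    have sg: "psd_mat d \<sigma>" "\<sigma> \<in> carrier_mat d d" using st unfolding is_state_def psd_mat_def by auto
    have aE: "mat_adjoint E \<in> carrier_mat d N" using E by simp
    have aV: "mat_adjoint V \<in> carrier_mat d L" using V by simp
    define K where "K = M * E"
    have K: "K \<in> carrier_mat L d" unfolding K_def using M E by simp
    have aK: "mat_adjoint K \<in> carrier_mat d L" using K by simp
    define T where "T = mat_adjoint E * Ph * E"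
    have T: "T \<in> carrier_mat d d" unfolding T_def using mult_carrier_mat[OF mult_carrier_mat[OF aE Ph] E] .
    define A1 where "A1 = mat_adjoint V * K"
    have A1: "A1 \<in> carrier_mat d d" unfolding A1_def using mult_carrier_mat[OF aV K] .
    define A1' where "A1' = mat_adjoint K * V"
    have A1'c: "A1' \<in> carrier_mat d d" unfolding A1'_def using mult_carrier_mat[OF aK V] .
    define A2 where "A2 = mat_adjoint K * (D * K)"
    have A2: "A2 \<in> carrier_mat d d" unfolding A2_def using mult_carrier_mat[OF aK mult_carrier_mat[OF D K]] .
    define S where "S = Sm d l Proj"
    have S: "S \<in> carrier_mat d d" unfolding S_def by simp
    have VV': "mat_adjoint V * V = S" unfolding V_def S_def by (rule VV[OF pr])
    have PhE: "Ph * E = R * K" unfolding K_def PhRM using assoc_mult_mat[OF R M E] by simp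
    have eT1: "T = s \<cdot>\<^sub>m A1"
    proof -
      have "T = mat_adjoint E * (Ph * E)" unfolding T_def using assoc_mult_mat[OF aE Ph E] by simp
      also have "\<dots> = (mat_adjoint E * R) * K" unfolding PhE using assoc_mult_mat[OF aE R K] by simp
      also have "\<dots> = s \<cdot>\<^sub>m A1" unfolding ER' A1_def using mult_smult_assoc_mat[OF aV K] .
      finally show ?thesis .
    qed
    have TH: "mat_adjoint T = T"
      unfolding T_def using adj_mult[OF mult_carrier_mat[OF aE Ph] E] adj_mult[OF aE Ph] PhH
        assoc_mult_mat[OF aE Ph E] by simp
    have eA1: "A1 = (1/s) \<cdot>\<^sub>m T" unfolding eT1 sm_sm using s0 A1 by (intro eq_matI) auto
    have eA1': "A1' = (1/s) \<cdot>\<^sub>m T"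
    proof -
      have "A1' = mat_adjoint A1" unfolding A1'_def A1_def using adj_mult[OF aV K] by simp
      also have "\<dots> = (1/s) \<cdot>\<^sub>m T" unfolding eA1 adj_smult TH using cs by (simp add: complex_cnj_divide)
      finally show ?thesis .
    qed
    have eT2: "T = (s*s) \<cdot>\<^sub>m (A1' * A1) + (t*t) \<cdot>\<^sub>m A2"
    proof -
      have "T = mat_adjoint E * (Ph * Ph) * E" unfolding T_def PhPh ..
      also have "\<dots> = mat_adjoint (Ph * E) * (Ph * E)"
        using adj_mult[OF Ph E] PhH assoc_mult_mat[OF aE Ph Ph] assoc_mult_mat[OF aE mult_carrier_mat[OF Ph Ph] E]
          assoc_mult_mat[OF aE Ph mult_carrier_mat[OF Ph E]] assoc_mult_mat[OF Ph Ph E] assoc_mult_mat[OF mult_carrier_mat[OF aE Ph] Ph E]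
        by simp
      also have "\<dots> = mat_adjoint K * ((mat_adjoint R * R) * K)" unfolding PhE
        using adj_mult[OF R K] assoc_mult_mat[OF aK adj_carrier[OF R] mult_carrier_mat[OF R K]]
          assoc_mult_mat[OF adj_carrier[OF R] R K] by simp
      also have "(mat_adjoint R * R) * K = (s*s) \<cdot>\<^sub>m (V * A1) + (t*t) \<cdot>\<^sub>m (D * K)"
        unfolding RR A1_def
        using add_mult_distrib_mat[OF smult_carrier_mat[OF mult_carrier_mat[OF V aV]] smult_carrier_mat[OF D] K]
          mult_smult_assoc_mat[OF mult_carrier_mat[OF V aV] K] mult_smult_assoc_mat[OF D K]
          assoc_mult_mat[OF V aV K] by simp
      also have "mat_adjoint K * \<dots> = (s*s) \<cdot>\<^sub>m (A1' * A1) + (t*t) \<cdot>\<^sub>m A2"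
        unfolding A1'_def A2_def
        using mult_add_distrib_mat[OF aK smult_carrier_mat[OF mult_carrier_mat[OF V A1]] smult_carrier_mat[OF mult_carrier_mat[OF D K]]]
          mult_smult_distrib[OF aK mult_carrier_mat[OF V A1]] mult_smult_distrib[OF aK mult_carrier_mat[OF D K]]
          assoc_mult_mat[OF aK V A1] by simp
      finally show ?thesis .
    qed
    have eT: "T = T * T + (t*t) \<cdot>\<^sub>m A2"
    proof -
      have "(s*s) \<cdot>\<^sub>m (A1' * A1) = T * T"
        unfolding eA1 eA1' using sm_mult[OF T T] s0 T by (simp add: sm_sm)
      then show ?thesis using eT2 by simp
    qed
    define b where "b = t * t / s"
    have cb: "cnj b = b" unfolding b_def using cs ct by (simp add: complex_cnj_divide)
    define Y where "Y = V - b \<cdot>\<^sub>m (D * K)"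
    have DKc: "D * K \<in> carrier_mat L d" using D K by simp
    have Y: "Y \<in> carrier_mat L d" unfolding Y_def using V DKc by (simp add: minus_carrier_mat)
    have VD: "mat_adjoint V * D = mat_adjoint V" using adj_mult[OF D V] DV' Dadj' by simp
    have eY: "mat_adjoint Y * Y = S - b \<cdot>\<^sub>m A1 - b \<cdot>\<^sub>m A1' + (b*b) \<cdot>\<^sub>m A2"
    proof -
      have aDK: "mat_adjoint (D * K) = mat_adjoint K * D" using adj_mult[OF D K] Dadj' by simp
      have 1: "mat_adjoint V * (b \<cdot>\<^sub>m (D * K)) = b \<cdot>\<^sub>m A1"
        unfolding A1_def using mult_smult_distrib[OF aV DKc] assoc_mult_mat[OF aV D K, symmetric] VD by simp
      have 2: "mat_adjoint (b \<cdot>\<^sub>m (D * K)) * V = b \<cdot>\<^sub>m A1'"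
        unfolding adj_smult cb aDK A1'_def
        using mult_smult_assoc_mat[OF mult_carrier_mat[OF aK D] V] assoc_mult_mat[OF aK D V] DV' by simp
      have 3: "mat_adjoint (b \<cdot>\<^sub>m (D * K)) * (b \<cdot>\<^sub>m (D * K)) = (b*b) \<cdot>\<^sub>m A2"
        unfolding adj_smult cb aDK A2_def
        using sm_mult[OF mult_carrier_mat[OF aK D] DKc] assoc_mult_mat[OF aK D DKc] assoc_mult_mat[OF D D K, symmetric] DD'
        by simp
      show ?thesis unfolding Y_def adj_expand[OF V smult_carrier_mat[OF DKc]] 1 2 3 VV' ..
    qed
    define c where "c = s * s / (t * t)"
    have cdef: "c = complex_of_real ((1 - \<alpha>) / \<alpha>)" unfolding c_def ss tt by simp
    have Z: "c \<cdot>\<^sub>m (mat_adjoint Y * Y) + mat_adjoint T * T + T = c \<cdot>\<^sub>m S"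
    proof (rule eq_matI)
      fix i j assume "i < dim_row (c \<cdot>\<^sub>m S)" "j < dim_col (c \<cdot>\<^sub>m S)"
      then have ij: "i < d" "j < d" using S by auto
      have e1: "A1 $$ (i,j) = T $$ (i,j) / s" using arg_cong[OF eA1, of "\<lambda>X. X $$ (i,j)"] ij T by simp
      have e2: "A1' $$ (i,j) = T $$ (i,j) / s" using arg_cong[OF eA1', of "\<lambda>X. X $$ (i,j)"] ij T by simp
      have e3: "T $$ (i,j) = (T * T) $$ (i,j) + t * t * A2 $$ (i,j)"
        using arg_cong[OF eT, of "\<lambda>X. X $$ (i,j)"] ij T A2 by simp
      have e4: "(mat_adjoint Y * Y) $$ (i,j) = S $$ (i,j) - b * A1 $$ (i,j) - b * A1' $$ (i,j) + b * b * A2 $$ (i,j)"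
        using arg_cong[OF eY, of "\<lambda>X. X $$ (i,j)"] ij S A1 A1'c A2 by simp
      have e5: "(mat_adjoint Y * Y) $$ (i,j) = S $$ (i,j) - 2 * (t*t) / (s*s) * T $$ (i,j) + (t*t)*(t*t)/(s*s) * A2 $$ (i,j)"
        unfolding e4 e1 e2 b_def using s0 by (simp add: field_simps)
      show "(c \<cdot>\<^sub>m (mat_adjoint Y * Y) + mat_adjoint T * T + T) $$ (i,j) = (c \<cdot>\<^sub>m S) $$ (i,j)"
      proof -
        have L: "(c \<cdot>\<^sub>m (mat_adjoint Y * Y) + mat_adjoint T * T + T) $$ (i,j) = c * (mat_adjoint Y * Y) $$ (i,j) + (T * T) $$ (i,j) + T $$ (i,j)"
          using ij T S Y TH by simp
        have A2e: "A2 $$ (i,j) = (T $$ (i,j) - (T * T) $$ (i,j)) / (t*t)" using e3 t0 by (simp add: field_simps)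
        define x where "x = (T * T) $$ (i,j)"
        have R': "(c \<cdot>\<^sub>m S) $$ (i,j) = c * S $$ (i,j)" using ij S by simp
        have "c * (mat_adjoint Y * Y) $$ (i,j) + x + T $$ (i,j) = c * S $$ (i,j)"
          unfolding e5 A2e x_def[symmetric] c_def using s0 t0 by (simp add: field_simps)
        then show ?thesis using L R' unfolding x_def by simp
      qed
    qed (use S Y T in auto)
    have "mtrace (Ph * embed_op d l \<sigma>) = mtrace (T * \<sigma>)"
      unfolding T_def by (rule trace_embed[OF Ph E sg(2)]) (unfold E_def, rule embed_eq[OF sg(2)])
    also have "\<dots> = c * mtrace (S * \<sigma>) - c * mtrace (mat_adjoint Y * Y * \<sigma>) - mtrace (mat_adjoint T * T * \<sigma>)"
    proof -
      have YY: "mat_adjoint Y * Y \<in> carrier_mat d d" using mult_carrier_mat[OF adj_carrier[OF Y] Y] .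
      have TT: "mat_adjoint T * T \<in> carrier_mat d d" using mult_carrier_mat[OF adj_carrier[OF T] T] .
      have "mtrace ((c \<cdot>\<^sub>m (mat_adjoint Y * Y) + mat_adjoint T * T + T) * \<sigma>)
          = c * mtrace (mat_adjoint Y * Y * \<sigma>) + mtrace (mat_adjoint T * T * \<sigma>) + mtrace (T * \<sigma>)"
        using add_mult_distrib_mat[OF add_carrier_mat[OF TT] T sg(2)]
          add_mult_distrib_mat[OF smult_carrier_mat[OF YY] TT sg(2)]
          mult_smult_assoc_mat[OF YY sg(2)]
          mtrace_add[OF mult_carrier_mat[OF add_carrier_mat[OF TT, of "c \<cdot>\<^sub>m (mat_adjoint Y * Y)"] sg(2)] mult_carrier_mat[OF T sg(2)]]
          mtrace_add[OF mult_carrier_mat[OF smult_carrier_mat[OF YY] sg(2)] mult_carrier_mat[OF TT sg(2)]]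
          mtrace_smult[OF mult_carrier_mat[OF YY sg(2)]]
        by simp
      moreover have "mtrace ((c \<cdot>\<^sub>m S) * \<sigma>) = c * mtrace (S * \<sigma>)"
        using mult_smult_assoc_mat[OF S sg(2)] mtrace_smult[OF mult_carrier_mat[OF S sg(2)]] by simp
      ultimately show ?thesis unfolding Z by (simp add: algebra_simps)
    qed
    also have "\<dots> \<le> c * mtrace (S * \<sigma>)"
    proof -
      have "0 \<le> mtrace (mat_adjoint Y * Y * \<sigma>)" using mtrace_psd[OF sg(1) Y] .
      moreover have "0 \<le> mtrace (mat_adjoint T * T * \<sigma>)" using mtrace_psd[OF sg(1) T] .
      moreover have "0 \<le> c" unfolding cdef using assms(1,2) by (simp add: less_eq_complex_def)
      ultimately have h: "0 \<le> c * mtrace (mat_adjoint Y * Y * \<sigma>) + mtrace (mat_adjoint T * T * \<sigma>)"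
        by (intro add_nonneg_nonneg mult_nonneg_nonneg)
      then show ?thesis by (metis add_le_cancel_left diff_add_cancel diff_diff_eq le_add_same_cancel1)
    qed
    also have "mtrace (S * \<sigma>) = (\<Sum>i<l. mtrace (Proj i * \<sigma>))"
      unfolding S_def by (rule trace_S[OF sg(2)]) (use pr in \<open>auto simp: is_projector_def\<close>)
    finally show "mtrace (Ph * embed_op d l \<sigma>) \<le> complex_of_real ((1 - \<alpha>) / \<alpha>) * (\<Sum>i<l. mtrace (Proj i * \<sigma>))"
      unfolding cdef .
  qed
  show ?thesis using proj cond1 cond2 by blast
qed


end
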